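(* Let $A$ be a noetherian commutative $\mathbb N$-graded ring, $\mathfrak m=A_+$, and $I=(a_1,\dots,a_n)$ an ideal of $A$ with $\mathrm{depth}_{\mathfrak m}(A)>\mathrm{depth}_I(A)$. Then $H^0_{\mathfrak m}\big(H_{n-\mathrm{depth}_I(A)}(\mathbf a;A)\big)=0$, where $H_\bullet(\mathbf a;A)$ is the Koszul homology of $a_1,\dots,a_n$ over $A$.
   Context: $H^0_{\mathfrak m}(N)=\{x\in N:\exists m,\ \mathfrak m^mx=0\}$. $\mathrm{depth}_{\mathfrak a}(A)$ is the grade of the ideal $\mathfrak a$ on $A$. *)

theory Defs
  imports Main "HOL-Library.Extended_Nat"
begin

definition is_ideal :: "'a::comm_ring_1 set \<Rightarrow> bool" where
  "is_ideal I \<longleftrightarrow> 0 \<in> I \<and> (\<forall>x\<in>I. \<forall>y\<in>I. x + y \<in> I) \<and> (\<forall>r. \<forall>x\<in>I. r * x \<in> I)"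

definition ideal_gen :: "'a::comm_ring_1 set \<Rightarrow> 'a set" where
  "ideal_gen S = {\<Sum>s\<in>F. r s * s | F r. finite F \<and> F \<subseteq> S}"

definition ideal_pow :: "'a::comm_ring_1 set \<Rightarrow> nat \<Rightarrow> 'a set" where
  "ideal_pow I k = ideal_gen {prod_list xs | xs. length xs = k \<and> set xs \<subseteq> I}"

definition noetherian_ring :: "'a::comm_ring_1 itself \<Rightarrow> bool" where
  "noetherian_ring (_ :: 'a itself) \<longleftrightarrow>
     (\<forall>I :: 'a set. is_ideal I \<longrightarrow> (\<exists>F. finite F \<and> F \<subseteq> I \<and> I = ideal_gen F))"

definition graded_ring :: "(nat \<Rightarrow> 'a::comm_ring_1 set) \<Rightarrow> bool" where
  "graded_ring G \<longleftrightarrow>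
     (\<forall>i. 0 \<in> G i \<and> (\<forall>x\<in>G i. \<forall>y\<in>G i. x + y \<in> G i \<and> - x \<in> G i)) \<and>
     (\<forall>i j. \<forall>x\<in>G i. \<forall>y\<in>G j. x * y \<in> G (i + j)) \<and>
     (\<forall>x. \<exists>!c. (\<forall>i. c i \<in> G i) \<and> finite {i. c i \<noteq> 0} \<and> x = (\<Sum>i\<in>{i. c i \<noteq> 0}. c i))"

definition irrelevant_ideal :: "(nat \<Rightarrow> 'a::comm_ring_1 set) \<Rightarrow> 'a set" where
  "irrelevant_ideal G = {\<Sum>i\<in>F. c i | F c. finite F \<and> 0 \<notin> F \<and> (\<forall>i\<in>F. c i \<in> G i)}"

definition weak_regular_seq :: "'a::comm_ring_1 list \<Rightarrow> bool" where
  "weak_regular_seq xs \<longleftrightarrow>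
     (\<forall>i<length xs. \<forall>y. xs ! i * y \<in> ideal_gen (set (take i xs)) \<longrightarrow> y \<in> ideal_gen (set (take i xs)))"

text \<open>depth_J(A) = grade of J on A: supremum of lengths of A-regular sequences in J
  (this is \<infinity> exactly when J = A, matching the Ext-definition).\<close>
definition grade :: "'a::comm_ring_1 set \<Rightarrow> enat" where
  "grade J = Sup {enat (length xs) | xs. set xs \<subseteq> J \<and> weak_regular_seq xs}"

text \<open>K_p is free on e_T, T \<subseteq> {0..<n}, |T| = p; chains are coefficient functions.\<close>
definition koszul_chain :: "nat \<Rightarrow> nat \<Rightarrow> (nat set \<Rightarrow> 'a::comm_ring_1) \<Rightarrow> bool" where
  "koszul_chain n p c \<longleftrightarrow> (\<forall>T. c T \<noteq> 0 \<longrightarrow> T \<subseteq> {..<n} \<and> card T = p)"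

text \<open>d(e_S) = sum_{j in S} (-1)^{#{i in S. i<j}} a_j e_{S-{j}}, written on coefficients.\<close>
definition koszul_d :: "(nat \<Rightarrow> 'a::comm_ring_1) \<Rightarrow> nat \<Rightarrow> (nat set \<Rightarrow> 'a) \<Rightarrow> nat set \<Rightarrow> 'a" where
  "koszul_d a n c T = (\<Sum>j\<in>{..<n} - T. (-1) ^ card {i\<in>T. i < j} * a j * c (insert j T))"

definition koszul_cycles :: "(nat \<Rightarrow> 'a::comm_ring_1) \<Rightarrow> nat \<Rightarrow> nat \<Rightarrow> (nat set \<Rightarrow> 'a) set" where
  "koszul_cycles a n p = {c. koszul_chain n p c \<and> koszul_d a n c = (\<lambda>_. 0)}"

definition koszul_boundaries :: "(nat \<Rightarrow> 'a::comm_ring_1) \<Rightarrow> nat \<Rightarrow> nat \<Rightarrow> (nat set \<Rightarrow> 'a) set" where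
  "koszul_boundaries a n p = {koszul_d a n c | c. koszul_chain n (Suc p) c}"

text \<open>H^0_m(H_p(a;A)) = 0, with H_p = Z_p / B_p: a class killed by some power of m is zero.\<close>
definition koszul_H0_vanishes :: "'a::comm_ring_1 set \<Rightarrow> (nat \<Rightarrow> 'a) \<Rightarrow> nat \<Rightarrow> nat \<Rightarrow> bool" where
  "koszul_H0_vanishes m a n p \<longleftrightarrow>
     (\<forall>z\<in>koszul_cycles a n p.
        (\<exists>k. \<forall>y\<in>ideal_pow m k. (\<lambda>T. y * z T) \<in> koszul_boundaries a n p)
        \<longrightarrow> z \<in> koszul_boundaries a n p)"

end

theory Submission
  imports Defs
begin


lemma ideal_neg: "is_ideal I \<Longrightarrow> x \<in> I \<Longrightarrow> - x \<in> I"
  unfolding is_ideal_def by (metis mult_minus1)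

lemma ideal_add: "is_ideal I \<Longrightarrow> x \<in> I \<Longrightarrow> y \<in> I \<Longrightarrow> x + y \<in> I"
  unfolding is_ideal_def by blast

lemma ideal_diff: "is_ideal I \<Longrightarrow> x \<in> I \<Longrightarrow> y \<in> I \<Longrightarrow> x - y \<in> I"
  using ideal_add[of I x "- y"] ideal_neg[of I y] by simp

lemma ideal_multl: "is_ideal I \<Longrightarrow> x \<in> I \<Longrightarrow> r * x \<in> I"
  unfolding is_ideal_def by blast

lemma ideal_multr: "is_ideal I \<Longrightarrow> x \<in> I \<Longrightarrow> x * r \<in> I"
  using ideal_multl[of I x r] by (simp add: mult.commute)

lemma ideal_zero: "is_ideal I \<Longrightarrow> 0 \<in> I"
  unfolding is_ideal_def by blast

lemma ideal_sum: "is_ideal I \<Longrightarrow> (\<And>x. x \<in> F \<Longrightarrow> f x \<in> I) \<Longrightarrow> sum f F \<in> I"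
proof (induction F rule: infinite_finite_induct)
  case (infinite A) then show ?case by (simp add: ideal_zero)
next
  case empty then show ?case by (simp add: ideal_zero)
next
  case (insert x F) then show ?case by (simp add: ideal_add)
qed

lemma ideal_gen_ideal: "is_ideal (ideal_gen S)"
  unfolding is_ideal_def
proof (intro conjI ballI allI)
  show "0 \<in> ideal_gen S" unfolding ideal_gen_def
    by (rule CollectI, rule exI[of _ "{}"], auto)
next
  fix x y assume "x \<in> ideal_gen S" "y \<in> ideal_gen S"
  then obtain F1 r1 F2 r2 where f1: "finite F1" "F1 \<subseteq> S" "x = (\<Sum>s\<in>F1. r1 s * s)"
    and f2: "finite F2" "F2 \<subseteq> S" "y = (\<Sum>s\<in>F2. r2 s * s)"
    unfolding ideal_gen_def by blast
  define r where "r s = (if s \<in> F1 then r1 s else 0) + (if s \<in> F2 then r2 s else 0)" for s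
  have "(\<Sum>s\<in>F1 \<union> F2. r s * s) = (\<Sum>s\<in>F1 \<union> F2. (if s \<in> F1 then r1 s * s else 0))
      + (\<Sum>s\<in>F1 \<union> F2. (if s \<in> F2 then r2 s * s else 0))"
    unfolding r_def sum.distrib[symmetric] by (rule sum.cong) (auto simp: distrib_right)
  also have "\<dots> = x + y"
  proof -
    have "(\<Sum>s\<in>F1 \<union> F2. (if s \<in> F1 then r1 s * s else 0)) = (\<Sum>s\<in>F1. r1 s * s)"
      using f1 f2 by (intro sum.mono_neutral_cong_right) auto
    moreover have "(\<Sum>s\<in>F1 \<union> F2. (if s \<in> F2 then r2 s * s else 0)) = (\<Sum>s\<in>F2. r2 s * s)"
      using f1 f2 by (intro sum.mono_neutral_cong_right) auto
    ultimately show ?thesis using f1 f2 by simp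
  qed
  finally show "x + y \<in> ideal_gen S" unfolding ideal_gen_def using f1 f2
    by (intro CollectI exI[of _ "F1 \<union> F2"] exI[of _ r]) auto
next
  fix r x assume "x \<in> ideal_gen S"
  then obtain F c where f: "finite F" "F \<subseteq> S" "x = (\<Sum>s\<in>F. c s * s)"
    unfolding ideal_gen_def by blast
  have "r * x = (\<Sum>s\<in>F. (r * c s) * s)" using f by (simp add: sum_distrib_left mult.assoc)
  then show "r * x \<in> ideal_gen S" unfolding ideal_gen_def using f
    by (intro CollectI exI[of _ F] exI[of _ "\<lambda>s. r * c s"]) auto
qed

lemma ideal_gen_sub: "S \<subseteq> ideal_gen S"
proof
  fix s assume "s \<in> S"
  then show "s \<in> ideal_gen S" unfolding ideal_gen_def
    by (intro CollectI exI[of _ "{s}"] exI[of _ "\<lambda>_. 1"]) auto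
qed

lemma ideal_gen_least: "is_ideal J \<Longrightarrow> S \<subseteq> J \<Longrightarrow> ideal_gen S \<subseteq> J"
  unfolding ideal_gen_def by (auto intro!: ideal_sum ideal_multl)

lemma ideal_gen_mono: "S \<subseteq> S' \<Longrightarrow> ideal_gen S \<subseteq> ideal_gen S'"
  using ideal_gen_least[OF ideal_gen_ideal, of S S'] ideal_gen_sub[of S'] by blast

lemma ideal_gen_empty: "ideal_gen {} = {0}"
  unfolding ideal_gen_def by auto

lemma ideal_gen_insert: "u \<in> ideal_gen (insert x S) \<Longrightarrow> \<exists>r. u - r * x \<in> ideal_gen S"
proof -
  assume "u \<in> ideal_gen (insert x S)"
  then obtain F c where f: "finite F" "F \<subseteq> insert x S" "u = (\<Sum>s\<in>F. c s * s)"
    unfolding ideal_gen_def by blast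
  show ?thesis
  proof (cases "x \<in> F")
    case True
    have "u = c x * x + (\<Sum>s\<in>F - {x}. c s * s)"
      using f True by (simp add: sum.remove)
    moreover have "(\<Sum>s\<in>F - {x}. c s * s) \<in> ideal_gen S"
      unfolding ideal_gen_def using f by blast
    ultimately show ?thesis by (intro exI[of _ "c x"]) simp
  next
    case False
    then have "F \<subseteq> S" using f by blast
    then show ?thesis using f unfolding ideal_gen_def by (intro exI[of _ 0]) auto
  qed
qed

lemma ideal_gen_insert2: "q \<in> ideal_gen S \<Longrightarrow> q + r * x \<in> ideal_gen (insert x S)"
  using ideal_gen_mono[of S "insert x S"] ideal_gen_sub[of "insert x S"]
  by (intro ideal_add[OF ideal_gen_ideal] ideal_multl[OF ideal_gen_ideal]) auto



definition sg :: "nat \<Rightarrow> nat set \<Rightarrow> 'a::comm_ring_1" where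
  "sg j T = (-1) ^ card {i\<in>T. i < j}"

lemma kd_sg: "koszul_d a N f T = (\<Sum>j\<in>{..<N} - T. sg j T * a j * f (insert j T))"
  by (simp add: koszul_d_def sg_def)

lemma sg_insert: "j \<notin> T \<Longrightarrow> sg k (insert j T) = (if j < k then - sg k T else (sg k T :: 'a::comm_ring_1))"
proof -
  assume j: "j \<notin> T"
  have fin: "finite {i\<in>T. i < k}" by (rule finite_subset[of _ "{..<k}"]) auto
  show ?thesis
  proof (cases "j < k")
    case True
    then have "{i\<in>insert j T. i < k} = insert j {i\<in>T. i < k}" by auto
    then show ?thesis using True j fin by (simp add: sg_def)
  next
    case False
    then have "{i\<in>insert j T. i < k} = {i\<in>T. i < k}" by auto
    then show ?thesis using False by (simp add: sg_def)
  qed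
qed

lemma sg_sq: "sg j T * sg j T = (1::'a::comm_ring_1)"
  unfolding sg_def by (simp flip: power_add)

lemma kd_kd: "koszul_d a N (koszul_d a N f) T = 0"
proof -
  define A where "A = {..<N} - T"
  define g where "g j k = sg j T * sg k (insert j T) * a j * a k * f (insert k (insert j T))" for j k
  have finA: "finite A" unfolding A_def by auto
  have "koszul_d a N (koszul_d a N f) T = (\<Sum>j\<in>A. \<Sum>k\<in>A - {j}. g j k)"
    unfolding kd_sg A_def g_def
    by (rule sum.cong) (auto simp: sum_distrib_left mult_ac Diff_insert2[symmetric] intro!: sum.cong)
  also have "\<dots> = (\<Sum>(j,k)\<in>Sigma A (\<lambda>j. A - {j}). g j k)"
    by (rule sum.Sigma) (use finA in auto)
  also have "Sigma A (\<lambda>j. A - {j}) = {(j,k). j \<in> A \<and> k \<in> A \<and> j < k} \<union> {(j,k). j \<in> A \<and> k \<in> A \<and> k < j}"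
    by auto
  also have "(\<Sum>(j,k)\<in>\<dots>. g j k) = (\<Sum>(j,k)\<in>{(j,k). j \<in> A \<and> k \<in> A \<and> j < k}. g j k)
      + (\<Sum>(j,k)\<in>{(j,k). j \<in> A \<and> k \<in> A \<and> k < j}. g j k)"
    by (rule sum.union_disjoint) (use finA in \<open>auto intro: finite_subset[of _ "A \<times> A"]\<close>)
  also have "{(j,k). j \<in> A \<and> k \<in> A \<and> k < j} = prod.swap ` {(j,k). j \<in> A \<and> k \<in> A \<and> j < k}"
    by auto
  also have "(\<Sum>(j,k)\<in>\<dots>. g j k) = (\<Sum>(j,k)\<in>{(j,k). j \<in> A \<and> k \<in> A \<and> j < k}. g k j)"
    by (subst sum.reindex) (auto simp: inj_on_def case_prod_unfold)
  also have "(\<Sum>(j,k)\<in>{(j,k). j \<in> A \<and> k \<in> A \<and> j < k}. g k j) = (\<Sum>(j,k)\<in>{(j,k). j \<in> A \<and> k \<in> A \<and> j < k}. - g j k)"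
  proof (rule sum.cong, simp, clarsimp)
    fix j k assume jk: "j \<in> A" "k \<in> A" "j < k"
    then have "j \<notin> T" "k \<notin> T" unfolding A_def by auto
    then show "g k j = - g j k" unfolding g_def using jk
      by (simp add: sg_insert insert_commute mult_ac)
  qed
  finally show ?thesis by (simp add: sum_negf case_prod_unfold)
qed

definition hmt :: "nat \<Rightarrow> (nat set \<Rightarrow> 'a::comm_ring_1) \<Rightarrow> nat set \<Rightarrow> 'a" where
  "hmt j f T = (if j \<in> T then sg j (T - {j}) * f (T - {j}) else 0)"

lemma hmt_id:
  assumes jN: "j < N"
  shows "koszul_d a N (hmt j f) T + hmt j (koszul_d a N f) T = a j * f T"
proof (cases "j \<in> T")
  case False
  have "koszul_d a N (hmt j f) T = (\<Sum>k\<in>{..<N} - T. if k = j then sg j T * a j * (sg j T * f T) else 0)"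
    unfolding kd_sg
  proof (rule sum.cong, simp)
    fix k assume "k \<in> {..<N} - T"
    then show "sg k T * a k * hmt j f (insert k T) = (if k = j then sg j T * a j * (sg j T * f T) else 0)"
      using False by (auto simp: hmt_def)
  qed
  also have "\<dots> = sg j T * a j * (sg j T * f T)"
    using False jN by (simp add: sum.delta')
  also have "\<dots> = (sg j T * sg j T) * a j * f T" by (simp add: mult_ac)
  finally show ?thesis using False by (simp add: sg_sq hmt_def)
next
  case True
  define T' where "T' = T - {j}"
  define B where "B = {..<N} - T"
  have T: "T = insert j T'" "j \<notin> T'" using True unfolding T'_def by auto
  have B: "{..<N} - T' = insert j B" "j \<notin> B" "finite B" using jN T unfolding B_def by auto
  have "hmt j (koszul_d a N f) T = sg j T' * koszul_d a N f T'"
    using True by (simp add: hmt_def T'_def)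
  also have "\<dots> = sg j T' * (sg j T' * a j * f (insert j T') + (\<Sum>k\<in>B. sg k T' * a k * f (insert k T')))"
    unfolding kd_sg B(1) using B by (simp add: sum.insert)
  also have "\<dots> = a j * f T + (\<Sum>k\<in>B. sg j T' * sg k T' * a k * f (insert k T'))"
  proof -
    have e1: "sg j T' * (sg j T' * a j * f (insert j T')) = (sg j T' * sg j T') * (a j * f T)"
      using T by (simp only: mult.assoc)
    have e2: "sg j T' * (\<Sum>k\<in>B. sg k T' * a k * f (insert k T')) = (\<Sum>k\<in>B. sg j T' * sg k T' * a k * f (insert k T'))"
      by (simp only: sum_distrib_left mult.assoc)
    show ?thesis unfolding distrib_left e1 e2 sg_sq by simp
  qed
  finally have h1: "hmt j (koszul_d a N f) T = a j * f T + (\<Sum>k\<in>B. sg j T' * sg k T' * a k * f (insert k T'))" .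
  have h2: "koszul_d a N (hmt j f) T = (\<Sum>k\<in>B. - (sg j T' * sg k T' * a k * f (insert k T')))"
    unfolding kd_sg B_def[symmetric]
  proof (rule sum.cong, simp)
    fix k assume k: "k \<in> B"
    then have kT: "k \<notin> T" "k \<noteq> j" "k \<notin> T'" using T unfolding B_def by auto
    have e: "insert k T - {j} = insert k T'" using T kT by auto
    have s1: "sg k T = (if j < k then - sg k T' else sg k T' :: 'a)"
      using T(2) by (subst T(1)) (rule sg_insert)
    have s2: "sg j (insert k T') = (if k < j then - sg j T' else sg j T' :: 'a)"
      using kT(3) by (rule sg_insert)
    show "sg k T * a k * hmt j f (insert k T) = - (sg j T' * sg k T' * a k * f (insert k T'))"
      unfolding hmt_def e using kT s1 s2 True by (auto simp: mult_ac)
  qed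
  show ?thesis unfolding h1 h2 by (simp add: sum_negf)
qed



lemma kd_add: "koszul_d a N (\<lambda>T. f T + g T) T = koszul_d a N f T + koszul_d a N g T"
  by (simp add: koszul_d_def sum.distrib[symmetric] algebra_simps)

lemma kd_diff: "koszul_d a N (\<lambda>T. f T - g T) T = koszul_d a N f T - koszul_d a N g T"
  by (simp add: koszul_d_def sum_subtractf[symmetric] algebra_simps)

lemma kd_smult: "koszul_d a N (\<lambda>T. x * f T) T = x * koszul_d a N f T"
  by (simp add: koszul_d_def sum_distrib_left mult_ac)

lemma kd_zero: "koszul_d a N (\<lambda>T. 0) T = 0"
  by (simp add: koszul_d_def)

lemma kd_ideal: "is_ideal Q \<Longrightarrow> (\<And>T. f T \<in> Q) \<Longrightarrow> koszul_d a N f T \<in> Q"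
  unfolding koszul_d_def by (intro ideal_sum) (auto intro: ideal_multl)

lemma chain_add: "koszul_chain N p f \<Longrightarrow> koszul_chain N p g \<Longrightarrow> koszul_chain N p (\<lambda>T. f T + g T)"
  unfolding koszul_chain_def by (metis add.right_neutral)

lemma chain_diff: "koszul_chain N p f \<Longrightarrow> koszul_chain N p g \<Longrightarrow> koszul_chain N p (\<lambda>T. f T - g T)"
  unfolding koszul_chain_def by (metis diff_self)

lemma chain_smult: "koszul_chain N p f \<Longrightarrow> koszul_chain N p (\<lambda>T. x * f T)"
  unfolding koszul_chain_def by (metis mult_zero_right)

lemma chain_zero: "koszul_chain N p (\<lambda>T. 0)"
  unfolding koszul_chain_def by simp

lemma chain_big: "koszul_chain N p f \<Longrightarrow> N < p \<Longrightarrow> f T = 0"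
  unfolding koszul_chain_def
  by (metis card_lessThan card_mono finite_lessThan leD)

lemma kd_supp:
  assumes "koszul_chain N q f" "koszul_d a N f T \<noteq> 0"
  shows "T \<subseteq> {..<N} \<and> Suc (card T) = q"
proof -
  obtain j where j: "j \<in> {..<N} - T" "f (insert j T) \<noteq> 0"
    using assms(2) unfolding koszul_d_def by (metis (no_types, lifting) mult_zero_right sum.neutral)
  then have "insert j T \<subseteq> {..<N}" "card (insert j T) = q"
    using assms(1) unfolding koszul_chain_def by blast+
  moreover have "finite T" using calculation(1) by (meson finite_lessThan finite_subset subset_insertI2 insert_subset)
  ultimately show ?thesis using j by auto
qed

lemma chain_kd: "koszul_chain N (Suc p) f \<Longrightarrow> koszul_chain N p (koszul_d a N f)"
  unfolding koszul_chain_def[of N p] using kd_supp by fastforce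

lemma chain_hmt:
  assumes "j < N" "koszul_chain N p f"
  shows "koszul_chain N (Suc p) (hmt j f)"
  unfolding koszul_chain_def
proof (intro allI impI)
  fix T assume "hmt j f T \<noteq> 0"
  then have jT: "j \<in> T" and "f (T - {j}) \<noteq> 0" by (auto simp: hmt_def split: if_splits)
  then have "T - {j} \<subseteq> {..<N}" "card (T - {j}) = p" using assms(2) unfolding koszul_chain_def by blast+
  moreover have "finite T" using calculation(1) by (metis finite_Diff2 finite_lessThan finite_subset finite.emptyI finite_insert)
  ultimately show "T \<subseteq> {..<N} \<and> card T = Suc p" using jT assms(1)
    by (metis Diff_empty Diff_insert0 card.remove insert_Diff insert_subset lessThan_iff)
qed

definition cycQ :: "(nat \<Rightarrow> 'a::comm_ring_1) \<Rightarrow> nat \<Rightarrow> 'a set \<Rightarrow> nat \<Rightarrow> (nat set \<Rightarrow> 'a) \<Rightarrow> bool" where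
  "cycQ a N Q p z \<longleftrightarrow> koszul_chain N p z \<and> (\<forall>T. koszul_d a N z T \<in> Q)"

definition bdQ :: "(nat \<Rightarrow> 'a::comm_ring_1) \<Rightarrow> nat \<Rightarrow> 'a set \<Rightarrow> nat \<Rightarrow> (nat set \<Rightarrow> 'a) \<Rightarrow> bool" where
  "bdQ a N Q p z \<longleftrightarrow> (\<exists>\<beta>. koszul_chain N (Suc p) \<beta> \<and> (\<forall>T. z T - koszul_d a N \<beta> T \<in> Q))"

definition Hz :: "(nat \<Rightarrow> 'a::comm_ring_1) \<Rightarrow> nat \<Rightarrow> 'a set \<Rightarrow> nat \<Rightarrow> bool" where
  "Hz a N Q p \<longleftrightarrow> (\<forall>z. cycQ a N Q p z \<longrightarrow> bdQ a N Q p z)"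

lemma decomp:
  assumes "koszul_chain N p f" "\<And>T. f T \<in> ideal_gen (insert x S)"
  shows "\<exists>w e. koszul_chain N p w \<and> (\<forall>T. e T \<in> ideal_gen S) \<and> (\<forall>T. f T = e T + x * w T)"
proof -
  define w where "w T = (if f T = 0 then 0 else (SOME r. f T - r * x \<in> ideal_gen S))" for T
  define e where "e T = f T - x * w T" for T
  have "e T \<in> ideal_gen S" for T
  proof (cases "f T = 0")
    case True then show ?thesis by (simp add: e_def w_def ideal_zero[OF ideal_gen_ideal])
  next
    case False
    have "\<exists>r. f T - r * x \<in> ideal_gen S" using ideal_gen_insert assms(2) by blast
    then have "f T - (SOME r. f T - r * x \<in> ideal_gen S) * x \<in> ideal_gen S" by (rule someI_ex)
    then show ?thesis using False by (simp add: e_def w_def mult.commute)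
  qed
  moreover have "koszul_chain N p w" using assms(1) unfolding koszul_chain_def w_def by auto
  ultimately show ?thesis by (intro exI[of _ w] exI[of _ e]) (auto simp: e_def)
qed

lemma kill:
  assumes Q: "is_ideal Q" and z: "cycQ a N Q p z" and x: "x \<in> ideal_gen (a ` {..<N})"
  shows "bdQ a N Q p (\<lambda>T. x * z T)"
proof -
  define J where "J = {x. bdQ a N Q p (\<lambda>T. x * z T)}"
  have "is_ideal J" unfolding is_ideal_def
  proof (intro conjI ballI allI)
    show "0 \<in> J" unfolding J_def bdQ_def
      by (intro CollectI exI[of _ "\<lambda>T. 0"]) (simp add: chain_zero kd_zero ideal_zero[OF Q])
  next
    fix x y assume "x \<in> J" "y \<in> J"
    then obtain b1 b2 where b: "koszul_chain N (Suc p) b1" "\<forall>T. x * z T - koszul_d a N b1 T \<in> Q"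
      "koszul_chain N (Suc p) b2" "\<forall>T. y * z T - koszul_d a N b2 T \<in> Q"
      unfolding J_def bdQ_def by blast
    show "x + y \<in> J" unfolding J_def bdQ_def
    proof (intro CollectI exI[of _ "\<lambda>T. b1 T + b2 T"] conjI allI)
      show "koszul_chain N (Suc p) (\<lambda>T. b1 T + b2 T)" using b by (rule_tac chain_add) auto
      fix T
      have "(x + y) * z T - koszul_d a N (\<lambda>T. b1 T + b2 T) T
          = (x * z T - koszul_d a N b1 T) + (y * z T - koszul_d a N b2 T)"
        by (simp add: kd_add algebra_simps)
      then show "(x + y) * z T - koszul_d a N (\<lambda>T. b1 T + b2 T) T \<in> Q"
        using b ideal_add[OF Q] by simp
    qed
  next
    fix r x assume "x \<in> J"
    then obtain b1 where b: "koszul_chain N (Suc p) b1" "\<forall>T. x * z T - koszul_d a N b1 T \<in> Q"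
      unfolding J_def bdQ_def by blast
    show "r * x \<in> J" unfolding J_def bdQ_def
    proof (intro CollectI exI[of _ "\<lambda>T. r * b1 T"] conjI allI)
      show "koszul_chain N (Suc p) (\<lambda>T. r * b1 T)" using b by (rule_tac chain_smult) auto
      fix T
      have "(r * x) * z T - koszul_d a N (\<lambda>T. r * b1 T) T = r * (x * z T - koszul_d a N b1 T)"
        by (simp add: kd_smult algebra_simps)
      then show "(r * x) * z T - koszul_d a N (\<lambda>T. r * b1 T) T \<in> Q"
        using b ideal_multl[OF Q] by simp
    qed
  qed
  moreover have "a ` {..<N} \<subseteq> J"
  proof
    fix y assume "y \<in> a ` {..<N}"
    then obtain j where j: "j < N" "y = a j" by auto
    show "y \<in> J" unfolding J_def bdQ_def
    proof (intro CollectI exI[of _ "hmt j z"] conjI allI)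
      show "koszul_chain N (Suc p) (hmt j z)" using z j by (intro chain_hmt) (auto simp: cycQ_def)
      fix T
      have "y * z T - koszul_d a N (hmt j z) T = hmt j (koszul_d a N z) T"
        using hmt_id[OF j(1), of a z T] j by (simp add: algebra_simps)
      then show "y * z T - koszul_d a N (hmt j z) T \<in> Q"
        using z by (auto simp: hmt_def cycQ_def intro: ideal_multl[OF Q] ideal_zero[OF Q])
    qed
  qed
  ultimately have "ideal_gen (a ` {..<N}) \<subseteq> J" by (rule ideal_gen_least)
  then show ?thesis using x unfolding J_def by blast
qed



definition regfrom :: "'a::comm_ring_1 set \<Rightarrow> 'a list \<Rightarrow> bool" where
  "regfrom S xs \<longleftrightarrow> (\<forall>i<length xs. \<forall>y. xs ! i * y \<in> ideal_gen (S \<union> set (take i xs))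
      \<longrightarrow> y \<in> ideal_gen (S \<union> set (take i xs)))"

lemma regfrom_Cons:
  assumes "regfrom S (x # xs)"
  shows "(\<forall>y. x * y \<in> ideal_gen S \<longrightarrow> y \<in> ideal_gen S) \<and> regfrom (insert x S) xs"
proof
  show "\<forall>y. x * y \<in> ideal_gen S \<longrightarrow> y \<in> ideal_gen S"
    using assms unfolding regfrom_def by (metis Un_empty_right length_Cons list.set(1) nth_Cons_0 take0 zero_less_Suc)
  show "regfrom (insert x S) xs" unfolding regfrom_def
  proof (intro allI impI)
    fix i y assume i: "i < length xs" and "xs ! i * y \<in> ideal_gen (insert x S \<union> set (take i xs))"
    then have "(x # xs) ! Suc i * y \<in> ideal_gen (S \<union> set (take (Suc i) (x # xs)))" by simp
    then have "y \<in> ideal_gen (S \<union> set (take (Suc i) (x # xs)))"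
      using assms i unfolding regfrom_def by (metis Suc_less_eq length_Cons)
    then show "y \<in> ideal_gen (insert x S \<union> set (take i xs))" by simp
  qed
qed

lemma regfrom_take: "regfrom S xs \<Longrightarrow> regfrom S (take k xs)"
  unfolding regfrom_def by (simp add: min_def)

lemma weak_regfrom: "weak_regular_seq xs \<Longrightarrow> regfrom {} xs"
  unfolding regfrom_def weak_regular_seq_def by simp

lemma depth_easy:
  "regfrom S xs \<Longrightarrow> set xs \<subseteq> ideal_gen (a ` {..<N}) \<Longrightarrow> N < q + length xs \<Longrightarrow> Hz a N (ideal_gen S) q"
proof (induction xs arbitrary: S q)
  case Nil
  show ?case unfolding Hz_def bdQ_def cycQ_def
  proof (intro allI impI)
    fix z assume "koszul_chain N q z \<and> (\<forall>T. koszul_d a N z T \<in> ideal_gen S)"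
    then have "z T = 0" for T using Nil chain_big by force
    then show "\<exists>\<beta>. koszul_chain N (Suc q) \<beta> \<and> (\<forall>T. z T - koszul_d a N \<beta> T \<in> ideal_gen S)"
      by (intro exI[of _ "\<lambda>T. 0"]) (simp add: chain_zero kd_zero ideal_zero[OF ideal_gen_ideal])
  qed
next
  case (Cons x xs)
  let ?Q = "ideal_gen S" and ?Q' = "ideal_gen (insert x S)"
  have Q: "is_ideal ?Q" "is_ideal ?Q'" by (rule ideal_gen_ideal)+
  have QQ': "?Q \<subseteq> ?Q'" by (rule ideal_gen_mono) auto
  have xQ': "x \<in> ?Q'" using ideal_gen_sub by blast
  from regfrom_Cons[OF Cons.prems(1)] have nzd: "\<And>y. x * y \<in> ?Q \<Longrightarrow> y \<in> ?Q"
    and rg: "regfrom (insert x S) xs" by auto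
  have IH: "Hz a N ?Q' (Suc q)"
    using Cons.IH[OF rg] Cons.prems by auto
  show ?case unfolding Hz_def
  proof (intro allI impI)
    fix z assume z: "cycQ a N ?Q q z"
    have "x \<in> ideal_gen (a ` {..<N})" using Cons.prems by auto
    from kill[OF Q(1) z this] obtain \<beta> where b: "koszul_chain N (Suc q) \<beta>"
      "\<forall>T. x * z T - koszul_d a N \<beta> T \<in> ?Q" unfolding bdQ_def by blast
    have "cycQ a N ?Q' (Suc q) \<beta>" unfolding cycQ_def
    proof (intro conjI allI)
      fix T
      have "koszul_d a N \<beta> T = x * z T - (x * z T - koszul_d a N \<beta> T)" by simp
      moreover have "x * z T \<in> ?Q'" using ideal_multr[OF Q(2) xQ'] by simp
      ultimately show "koszul_d a N \<beta> T \<in> ?Q'" using b QQ' ideal_diff[OF Q(2)] by (metis subsetD)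
    qed (use b in auto)
    with IH obtain \<gamma> where g: "koszul_chain N (Suc (Suc q)) \<gamma>" "\<forall>T. \<beta> T - koszul_d a N \<gamma> T \<in> ?Q'"
      unfolding Hz_def bdQ_def by blast
    have "koszul_chain N (Suc q) (\<lambda>T. \<beta> T - koszul_d a N \<gamma> T)"
      using b g by (intro chain_diff chain_kd)
    from decomp[OF this] g obtain w e where we: "koszul_chain N (Suc q) w" "\<forall>T. e T \<in> ?Q"
      "\<forall>T. \<beta> T - koszul_d a N \<gamma> T = e T + x * w T" by blast
    have beq: "\<beta> = (\<lambda>T. (koszul_d a N \<gamma> T + e T) + x * w T)"
      using we(3) by (auto simp: algebra_simps eq_diff_eq)
    have dbeq: "koszul_d a N \<beta> T = koszul_d a N e T + x * koszul_d a N w T" for T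
      by (subst beq) (simp add: kd_add kd_smult kd_kd)
    show "bdQ a N ?Q q z" unfolding bdQ_def
    proof (intro exI[of _ w] conjI allI)
      show "koszul_chain N (Suc q) w" by (rule we(1))
      fix T
      have "x * (z T - koszul_d a N w T) = (x * z T - koszul_d a N \<beta> T) + koszul_d a N e T"
        by (simp add: dbeq algebra_simps)
      also have "\<dots> \<in> ?Q" using b we(2) by (intro ideal_add[OF Q(1)] kd_ideal[OF Q(1)]) auto
      finally show "z T - koszul_d a N w T \<in> ?Q" by (rule nzd)
    qed
  qed
qed



lemma transfer:
  assumes nzd: "\<And>y. x * y \<in> ideal_gen S \<Longrightarrow> y \<in> ideal_gen S"
    and H: "\<forall>q. N \<le> q + Suc j \<longrightarrow> Hz b N (ideal_gen S) q"
  shows "\<forall>q. N \<le> q + j \<longrightarrow> Hz b N (ideal_gen (insert x S)) q"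
proof (intro allI impI)
  fix q assume qj: "N \<le> q + j"
  let ?Q = "ideal_gen S" and ?Q' = "ideal_gen (insert x S)"
  have Q: "is_ideal ?Q" "is_ideal ?Q'" by (rule ideal_gen_ideal)+
  have QQ': "?Q \<subseteq> ?Q'" by (rule ideal_gen_mono) auto
  have xQ': "x \<in> ?Q'" using ideal_gen_sub by blast
  show "Hz b N ?Q' q" unfolding Hz_def
  proof (intro allI impI)
    fix u assume u: "cycQ b N ?Q' q u"
    show "bdQ b N ?Q' q u"
    proof (cases q)
      case 0
      have "koszul_d b N u T = 0" for T using kd_supp u 0 unfolding cycQ_def by fastforce
      then have "cycQ b N ?Q q u" using u ideal_zero[OF Q(1)] unfolding cycQ_def by simp
      then have "bdQ b N ?Q q u" using H qj unfolding Hz_def by simp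
      then show ?thesis using QQ' unfolding bdQ_def by blast
    next
      case (Suc q')
      have "koszul_chain N q' (koszul_d b N u)" using u Suc unfolding cycQ_def by (simp add: chain_kd)
      from decomp[OF this] u obtain v e where ve: "koszul_chain N q' v" "\<forall>T. e T \<in> ?Q"
        "\<forall>T. koszul_d b N u T = e T + x * v T" unfolding cycQ_def by blast
      have "cycQ b N ?Q q' v" unfolding cycQ_def
      proof (intro conjI allI)
        fix T
        have xv: "(\<lambda>T. x * v T) = (\<lambda>T. koszul_d b N u T - e T)" using ve(3) by (auto simp: algebra_simps)
        have "x * koszul_d b N v T = koszul_d b N (\<lambda>T. x * v T) T" by (simp add: kd_smult)
        also have "\<dots> = - koszul_d b N e T" unfolding xv by (simp add: kd_diff kd_kd)
        also have "\<dots> \<in> ?Q" using ve(2) by (intro ideal_neg[OF Q(1)] kd_ideal[OF Q(1)]) auto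
        finally show "koszul_d b N v T \<in> ?Q" by (rule nzd)
      qed (use ve in auto)
      then have "bdQ b N ?Q q' v" using H qj Suc unfolding Hz_def by simp
      then obtain t where t: "koszul_chain N q t" "\<forall>T. v T - koszul_d b N t T \<in> ?Q"
        unfolding bdQ_def Suc by blast
      define u' where "u' T = u T - x * t T" for T
      have "cycQ b N ?Q q u'" unfolding cycQ_def
      proof (intro conjI allI)
        show "koszul_chain N q u'" unfolding u'_def using u t
          by (intro chain_diff chain_smult) (auto simp: cycQ_def)
        fix T
        have "koszul_d b N u' T = e T + x * (v T - koszul_d b N t T)"
          unfolding u'_def by (simp add: kd_diff kd_smult ve(3) algebra_simps)
        also have "\<dots> \<in> ?Q" using ve(2) t(2) by (intro ideal_add[OF Q(1)] ideal_multl[OF Q(1)]) auto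
        finally show "koszul_d b N u' T \<in> ?Q" .
      qed
      then have "bdQ b N ?Q q u'" using H qj unfolding Hz_def by simp
      then obtain \<beta> where be: "koszul_chain N (Suc q) \<beta>" "\<forall>T. u' T - koszul_d b N \<beta> T \<in> ?Q"
        unfolding bdQ_def by blast
      show ?thesis unfolding bdQ_def
      proof (intro exI[of _ \<beta>] conjI allI)
        show "koszul_chain N (Suc q) \<beta>" by (rule be(1))
        fix T
        have "u T - koszul_d b N \<beta> T = (u' T - koszul_d b N \<beta> T) + t T * x"
          by (simp add: u'_def algebra_simps)
        also have "\<dots> \<in> ?Q'" using be(2) QQ' by (intro ideal_add[OF Q(2)] ideal_multl[OF Q(2) xQ']) auto
        finally show "u T - koszul_d b N \<beta> T \<in> ?Q'" .
      qed
    qed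
  qed
qed

lemma ann_from_Hz:
  assumes Q: "is_ideal Q" and H: "Hz b s Q s" and w: "\<forall>j<s. b j * w \<in> Q"
  shows "w \<in> Q"
proof -
  define z where "z T = (if T = {..<s} then w else 0)" for T
  have ch: "koszul_chain s s z" unfolding koszul_chain_def z_def by auto
  have "koszul_d b s z T \<in> Q" for T
    unfolding kd_sg
  proof (intro ideal_sum[OF Q])
    fix j assume "j \<in> {..<s} - T"
    then show "sg j T * b j * z (insert j T) \<in> Q"
      using w by (auto simp: z_def mult.assoc intro: ideal_multl[OF Q] ideal_zero[OF Q])
  qed
  then have "cycQ b s Q s z" using ch unfolding cycQ_def by blast
  then obtain \<beta> where be: "koszul_chain s (Suc s) \<beta>" "\<forall>T. z T - koszul_d b s \<beta> T \<in> Q"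
    using H unfolding Hz_def bdQ_def by blast
  have "\<beta> = (\<lambda>T. 0)" using chain_big[OF be(1)] by auto
  then show ?thesis using be(2)[rule_format, of "{..<s}"] by (simp add: z_def kd_zero)
qed

lemma pow_mult:
  assumes u: "u \<in> m" and y: "y \<in> ideal_pow m k"
  shows "u * y \<in> ideal_pow m (Suc k)"
proof -
  let ?J = "{y. u * y \<in> ideal_pow m (Suc k)}"
  have I: "is_ideal (ideal_pow m (Suc k))" unfolding ideal_pow_def by (rule ideal_gen_ideal)
  have "is_ideal ?J" unfolding is_ideal_def
  proof (intro conjI ballI allI)
    show "0 \<in> ?J" using ideal_zero[OF I] by simp
    fix x y assume "x \<in> ?J" "y \<in> ?J"
    then show "x + y \<in> ?J" using ideal_add[OF I, of "u * x" "u * y"] by (simp add: distrib_left)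
  next
    fix r x assume "x \<in> ?J"
    then show "r * x \<in> ?J" using ideal_multl[OF I, of "u * x" r] by (simp add: mult.left_commute)
  qed
  moreover have "{prod_list xs | xs. length xs = k \<and> set xs \<subseteq> m} \<subseteq> ?J"
  proof
    fix p assume "p \<in> {prod_list xs | xs. length xs = k \<and> set xs \<subseteq> m}"
    then obtain xs where xs: "p = prod_list xs" "length xs = k" "set xs \<subseteq> m" by blast
    then have "u * p \<in> {prod_list xs | xs. length xs = Suc k \<and> set xs \<subseteq> m}"
      using u by (intro CollectI exI[of _ "u # xs"]) auto
    then have "u * p \<in> ideal_pow m (Suc k)" unfolding ideal_pow_def by (rule subsetD[OF ideal_gen_sub])
    then show "p \<in> ?J" by simp
  qed
  ultimately have "ideal_pow m k \<subseteq> ?J" unfolding ideal_pow_def by (rule ideal_gen_least)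
  then show ?thesis using y by blast
qed

lemma one_pow0: "(1::'a::comm_ring_1) \<in> ideal_pow m 0"
proof -
  have "(1::'a) \<in> {prod_list xs | xs. length xs = 0 \<and> set xs \<subseteq> m}"
    by (intro CollectI exI[of _ "[]"]) auto
  then show ?thesis unfolding ideal_pow_def by (rule subsetD[OF ideal_gen_sub])
qed

lemma torsion_base:
  assumes Q: "is_ideal Q" and ann: "\<And>w. (\<forall>u\<in>m. u * w \<in> Q) \<Longrightarrow> w \<in> Q"
  shows "(\<forall>y\<in>ideal_pow m k. y * w \<in> Q) \<Longrightarrow> w \<in> Q"
proof (induction k arbitrary: w)
  case 0 then show ?case using one_pow0[of m] by force
next
  case (Suc k)
  have "\<forall>y\<in>ideal_pow m k. y * w \<in> Q"
  proof
    fix y assume y: "y \<in> ideal_pow m k"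
    show "y * w \<in> Q"
    proof (rule ann, intro ballI)
      fix u assume "u \<in> m"
      then have "u * y \<in> ideal_pow m (Suc k)" using pow_mult y by blast
      then have "(u * y) * w \<in> Q" using Suc.prems by blast
      then show "u * (y * w) \<in> Q" by (simp add: mult.assoc)
    qed
  qed
  then show ?case by (rule Suc.IH)
qed

definition tf :: "'a::comm_ring_1 set \<Rightarrow> (nat \<Rightarrow> 'a) \<Rightarrow> nat \<Rightarrow> 'a set \<Rightarrow> nat \<Rightarrow> bool" where
  "tf m a N Q p \<longleftrightarrow> (\<forall>z. cycQ a N Q p z \<longrightarrow> (\<exists>k. \<forall>y\<in>ideal_pow m k. bdQ a N Q p (\<lambda>T. y * z T))
      \<longrightarrow> bdQ a N Q p z)"



lemma tf_main:
  "regfrom S xs \<Longrightarrow> set xs \<subseteq> ideal_gen (a ` {..<n}) \<Longrightarrow> length xs \<le> n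
   \<Longrightarrow> (\<forall>q. s \<le> q + length xs \<longrightarrow> Hz b s (ideal_gen S) q) \<Longrightarrow> (\<forall>j<s. b j \<in> m)
   \<Longrightarrow> tf m a n (ideal_gen S) (n - length xs)"
proof (induction xs arbitrary: S)
  case Nil
  let ?Q = "ideal_gen S"
  have Q: "is_ideal ?Q" by (rule ideal_gen_ideal)
  have H: "Hz b s ?Q s" using Nil by auto
  have ann: "w \<in> ?Q" if "\<forall>u\<in>m. u * w \<in> ?Q" for w
    using ann_from_Hz[OF Q H] that Nil(5) by blast
  show ?case unfolding tf_def
  proof (intro allI impI)
    fix z assume z: "cycQ a n ?Q (n - length []) z"
      and "\<exists>k. \<forall>y\<in>ideal_pow m k. bdQ a n ?Q (n - length []) (\<lambda>T. y * z T)"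
    then obtain k where k: "\<forall>y\<in>ideal_pow m k. bdQ a n ?Q n (\<lambda>T. y * z T)" by auto
    have zT: "z T \<in> ?Q" for T
    proof (rule torsion_base[OF Q ann])
      show "\<forall>y\<in>ideal_pow m k. y * z T \<in> ?Q"
      proof
        fix y assume "y \<in> ideal_pow m k"
        then obtain \<beta> where be: "koszul_chain n (Suc n) \<beta>" "\<forall>T. y * z T - koszul_d a n \<beta> T \<in> ?Q"
          using k unfolding bdQ_def by blast
        have "\<beta> = (\<lambda>T. 0)" using chain_big[OF be(1)] by auto
        then show "y * z T \<in> ?Q" using be(2) by (simp add: kd_zero)
      qed
    qed auto
    show "bdQ a n ?Q (n - length []) z" unfolding bdQ_def
      by (intro exI[of _ "\<lambda>T. 0"]) (simp add: chain_zero kd_zero zT)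
  qed
next
  case (Cons x xs)
  let ?Q = "ideal_gen S" and ?Q' = "ideal_gen (insert x S)"
  have Q: "is_ideal ?Q" "is_ideal ?Q'" by (rule ideal_gen_ideal)+
  have QQ': "?Q \<subseteq> ?Q'" by (rule ideal_gen_mono) auto
  have xQ': "x \<in> ?Q'" using ideal_gen_sub by blast
  from regfrom_Cons[OF Cons.prems(1)] have nzd: "\<And>y. x * y \<in> ?Q \<Longrightarrow> y \<in> ?Q"
    and rg: "regfrom (insert x S) xs" by auto
  define q where "q = n - Suc (length xs)"
  have nq: "n - length xs = Suc q" "n = q + Suc (length xs)" using Cons.prems(3) unfolding q_def by auto
  have Hb': "\<forall>q. s \<le> q + length xs \<longrightarrow> Hz b s ?Q' q"
    using transfer[of x S s "length xs" b] nzd Cons.prems(4) by auto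
  have IH: "tf m a n ?Q' (Suc q)"
    using Cons.IH[OF rg _ _ Hb' Cons.prems(5)] Cons.prems(2,3) nq(1) by auto
  have HaQ: "Hz a n ?Q (Suc q)"
    using depth_easy[OF Cons.prems(1) Cons.prems(2)] nq(2) by auto
  show ?case unfolding tf_def
  proof (intro allI impI)
    fix z assume z0: "cycQ a n ?Q (n - length (x # xs)) z"
      and "\<exists>k. \<forall>y\<in>ideal_pow m k. bdQ a n ?Q (n - length (x # xs)) (\<lambda>T. y * z T)"
    then have z: "cycQ a n ?Q q z" by (simp add: q_def)
    from \<open>\<exists>k. _\<close> obtain k where k: "\<forall>y\<in>ideal_pow m k. bdQ a n ?Q q (\<lambda>T. y * z T)"
      by (auto simp: q_def)
    have "x \<in> ideal_gen (a ` {..<n})" using Cons.prems by auto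
    from kill[OF Q(1) z this] obtain u where u: "koszul_chain n (Suc q) u"
      "\<forall>T. x * z T - koszul_d a n u T \<in> ?Q" unfolding bdQ_def by blast
    define e where "e T = x * z T - koszul_d a n u T" for T
    have eQ: "e T \<in> ?Q" for T using u e_def by simp
    have du: "koszul_d a n u T = x * z T - e T" for T by (simp add: e_def)
    have ucyc: "cycQ a n ?Q' (Suc q) u" unfolding cycQ_def
    proof (intro conjI allI)
      fix T
      show "koszul_d a n u T \<in> ?Q'" unfolding du
        using eQ QQ' by (intro ideal_diff[OF Q(2)] ideal_multr[OF Q(2) xQ']) auto
    qed (rule u(1))
    have utors: "\<forall>y\<in>ideal_pow m k. bdQ a n ?Q' (Suc q) (\<lambda>T. y * u T)"
    proof
      fix y assume "y \<in> ideal_pow m k"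
      then obtain \<beta> where be: "koszul_chain n (Suc q) \<beta>" "\<forall>T. y * z T - koszul_d a n \<beta> T \<in> ?Q"
        using k unfolding bdQ_def by blast
      define v where "v T = y * u T - x * \<beta> T" for T
      have "cycQ a n ?Q (Suc q) v" unfolding cycQ_def
      proof (intro conjI allI)
        show "koszul_chain n (Suc q) v" unfolding v_def using u(1) be(1)
          by (intro chain_diff chain_smult)
        fix T
        have "koszul_d a n v T = x * (y * z T - koszul_d a n \<beta> T) - y * e T"
          unfolding v_def by (simp add: kd_diff kd_smult du algebra_simps)
        also have "\<dots> \<in> ?Q"
          by (rule ideal_diff[OF Q(1) ideal_multl[OF Q(1) be(2)[rule_format, of T], of x] ideal_multl[OF Q(1) eQ, of y]])
        finally show "koszul_d a n v T \<in> ?Q" .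
      qed
      with HaQ obtain \<gamma> where ga: "koszul_chain n (Suc (Suc q)) \<gamma>" "\<forall>T. v T - koszul_d a n \<gamma> T \<in> ?Q"
        unfolding Hz_def bdQ_def by blast
      show "bdQ a n ?Q' (Suc q) (\<lambda>T. y * u T)" unfolding bdQ_def
      proof (intro exI[of _ \<gamma>] conjI allI)
        show "koszul_chain n (Suc (Suc q)) \<gamma>" by (rule ga(1))
        fix T
        have "y * u T - koszul_d a n \<gamma> T = (v T - koszul_d a n \<gamma> T) + \<beta> T * x"
          by (simp add: v_def algebra_simps)
        also have "\<dots> \<in> ?Q'" using ga(2) QQ'
          by (intro ideal_add[OF Q(2)] ideal_multl[OF Q(2) xQ']) auto
        finally show "y * u T - koszul_d a n \<gamma> T \<in> ?Q'" .
      qed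
    qed
    have "bdQ a n ?Q' (Suc q) u" using IH ucyc utors unfolding tf_def by blast
    then obtain t where t: "koszul_chain n (Suc (Suc q)) t" "\<forall>T. u T - koszul_d a n t T \<in> ?Q'"
      unfolding bdQ_def by blast
    have "koszul_chain n (Suc q) (\<lambda>T. u T - koszul_d a n t T)"
      using u(1) t(1) by (intro chain_diff chain_kd)
    from decomp[OF this] t obtain w e3 where we: "koszul_chain n (Suc q) w" "\<forall>T. e3 T \<in> ?Q"
      "\<forall>T. u T - koszul_d a n t T = e3 T + x * w T" by blast
    have ueq: "u = (\<lambda>T. (koszul_d a n t T + e3 T) + x * w T)"
      using we(3) by (auto simp: algebra_simps eq_diff_eq)
    have dueq: "koszul_d a n u T = koszul_d a n e3 T + x * koszul_d a n w T" for T
      by (subst ueq) (simp add: kd_add kd_smult kd_kd)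
    show "bdQ a n ?Q (n - length (x # xs)) z" unfolding bdQ_def
    proof (intro exI[of _ w] conjI allI)
      show "koszul_chain n (Suc (n - length (x # xs))) w" using we(1) by (simp add: q_def)
      fix T
      have "x * (z T - koszul_d a n w T) = e T + koszul_d a n e3 T"
        by (simp add: e_def dueq algebra_simps)
      also have "\<dots> \<in> ?Q" using eQ we(2) by (intro ideal_add[OF Q(1)] kd_ideal[OF Q(1)]) auto
      finally show "z T - koszul_d a n w T \<in> ?Q" by (rule nzd)
    qed
  qed
qed



lemma bd0: "bdQ a N {0} p z \<longleftrightarrow> z \<in> koszul_boundaries a N p"
  unfolding bdQ_def koszul_boundaries_def by auto

lemma cyc0: "z \<in> koszul_cycles a N p \<Longrightarrow> cycQ a N {0} p z"
  unfolding koszul_cycles_def cycQ_def by auto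

theorem mainTheorem8:
  fixes G :: "nat \<Rightarrow> 'a::comm_ring_1 set" and a :: "nat \<Rightarrow> 'a" and n :: nat
  assumes "noetherian_ring TYPE('a)"
    and "graded_ring G"
    and "grade (irrelevant_ideal G) > grade (ideal_gen (a ` {..<n}))"
  shows "koszul_H0_vanishes (irrelevant_ideal G) a n (n - the_enat (grade (ideal_gen (a ` {..<n}))))"
proof -
  define I where "I = ideal_gen (a ` {..<n})"
  define m where "m = irrelevant_ideal G"
  have lt: "grade I < grade m" using assms(3) unfolding I_def m_def by simp
  define X where "X = {enat (length xs) |xs. set xs \<subseteq> I \<and> weak_regular_seq xs}"
  have gX: "grade I = Sup X" unfolding grade_def X_def by simp
  have "grade I \<noteq> \<infinity>" using lt by (metis enat_ord_simps(6) less_infinityE not_less_iff_gr_or_eq)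
  then obtain g where g: "grade I = enat g" by (cases "grade I") auto
  have "[] \<in> {xs. set xs \<subseteq> I \<and> weak_regular_seq xs}" by (simp add: weak_regular_seq_def)
  then have Xne: "X \<noteq> {}" unfolding X_def by blast
  have Xfin: "finite X" using gX g Xne unfolding Sup_enat_def by (auto split: if_splits)
  have "enat g \<in> X" using gX g Xne Xfin unfolding Sup_enat_def by (auto split: if_splits)
  then obtain xs where xs: "length xs = g" "set xs \<subseteq> I" "weak_regular_seq xs"
    unfolding X_def by auto
  have "enat g < grade m" using lt g by simp
  then obtain ys where ys: "g < length ys" "set ys \<subseteq> m" "weak_regular_seq ys"
    unfolding grade_def less_Sup_iff by auto
  define b where "b j = ys ! j" for j
  define s where "s = length ys"
  have bim: "b ` {..<s} = set ys" unfolding b_def s_def by (auto simp: set_conv_nth)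
  have Hb: "Hz b s (ideal_gen {}) q" if "s < q + length ys" for q
    using depth_easy[OF weak_regfrom[OF ys(3)], of b s q] that ideal_gen_sub[of "set ys"] bim by auto
  have bm: "\<forall>j<s. b j \<in> m" using ys(2) unfolding b_def s_def by auto
  have tf: "tf m a n (ideal_gen {}) (n - length (take n xs))"
  proof (rule tf_main[OF regfrom_take[OF weak_regfrom[OF xs(3)]]])
    show "set (take n xs) \<subseteq> ideal_gen (a ` {..<n})" using xs(2) set_take_subset unfolding I_def by fast
    show "\<forall>q. s \<le> q + length (take n xs) \<longrightarrow> Hz b s (ideal_gen {}) q"
      using Hb xs(1) ys(1) unfolding s_def by auto
  qed (use bm in auto)
  have p: "n - length (take n xs) = n - the_enat (grade I)" using xs(1) g by auto
  show ?thesis unfolding koszul_H0_vanishes_def m_def[symmetric] I_def[symmetric] p[symmetric]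
  proof (intro ballI impI)
    fix z assume z: "z \<in> koszul_cycles a n (n - length (take n xs))"
      and "\<exists>k. \<forall>y\<in>ideal_pow m k. (\<lambda>T. y * z T) \<in> koszul_boundaries a n (n - length (take n xs))"
    then show "z \<in> koszul_boundaries a n (n - length (take n xs))"
      using tf cyc0[OF z] unfolding tf_def ideal_gen_empty bd0 by blast
  qed
qed

end
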